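(* Fix $q\in[0,1)$, $N\in\mathbb N$, $k\in\llbracket0,N\rrbracket$, and let $X$ be an integer that is sufficiently large (depending on $N$ and $k$). Let $\dot\zeta_0$ and $\ddot\zeta_0$ be random bijections of $\llbracket -X,X\rrbracket$ defined as follows. $\dot\zeta_0$ is the identity on $\llbracket k+1,X\rrbracket$ and its restriction to $\llbracket -X,k\rrbracket$ has the Mallows law $\mathcal M_{-X,k}$. $\ddot\zeta_0$ is obtained by first taking a random bijection $u$ of $\llbracket -X,X\rrbracket$ which is the identity on $\llbracket -X,-X+k-1\rrbracket$ and whose restriction to $\llbracket -X+k,X\rrbracket$ has law $\mathcal M_{-X+k,X}$, and then letting $\ddot\zeta_0$ have the law of the $s\to\infty$ limit of the multi-species dynamics on the sites $\llbracket -X,k\rrbracket$ started from $u$ (values at sites in $\llbracket k+1,X\rrbracket$ unchanged). Couple $\dot\zeta_0,\ddot\zeta_0$ so that $\mathbb 1[\dot\zeta_0(x)\le -X+k-1]=\mathbb 1[\ddot\zeta_0(x)\le -X+k-1]$ for all $x$ almost surely (these two configurations have the same law), independently of the Poisson processes. Let $\dot{\boldsymbol\zeta},\ddot{\boldsymbol\zeta}$ be the multi-species ASEPs on $\llbracket -X,X\rrbracket$ started from $\dot\zeta_0,\ddot\zeta_0$, and $\boldsymbol\xi$ the biased card shuffling of size $N$ started from the identity of $[N]$, all under the basic coupling. Let $\dot\zeta^i_t(x)=\mathbb 1[\dot\zeta_t(x)\le i]$, $\ddot\zeta^i_t(x)=\mathbb 1[\ddot\zeta_t(x)\le i]$, $\xi^k_t(x)=\mathbb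 1[\xi_t(x)\le k]$. Then almost surely for every $t\ge0$, \[ h\{\ddot\zeta^{-1+k-N}_t\}\le h\{\xi^k_t\}\quad\text{and}\quad h\{\ddot\zeta^{-1+k-N}_t\}\le h\{\ddot\zeta^{-X+k-1}_t\}=h\{\dot\zeta^{-X+k-1}_t\}\le h'\{\dot\zeta^k_t\}. \]
   Context: $\llbracket x,y\rrbracket$ is the set of integers in $[x,y]$, $[N]=\llbracket1,N\rrbracket$. For integers $m\le n$, $\mathcal M_{m,n}$ is the Mallows measure on bijections $w$ of $\llbracket m,n\rrbracket$: $\mathcal M_{m,n}(w)\propto q^{\#\{m\le i<j\le n:\,w(i)<w(j)\}}$. Multi-species dynamics on a finite interval $D$ (state: an injective labelling of the sites of $D$ by integers): each nearest-neighbour pair $x,x+1\in D$ swaps its values at rate $1$ if the value at $x$ is smaller and at rate $q$ otherwise; on $[N]$ started from a bijection this is the biased card shuffling, on $\llbracket-X,X\rrbracket$ the multi-species ASEP there. Basic coupling: independent Poisson point processes $\Pi_1,\Pi_q$ on $\mathbb Z\times[0,\infty)$ of intensities $1,q$; at $(x,s)\in\Pi_1$ with $x,x+1$ in the domain, swap values at $x,x+1$ if the value at $x$ is smaller just before $s$; at $(x,s)\in\Pi_q$, swap if it is larger; all processes use the same $\Pi_1,\Pi_q$. Height functions: for $\omega:\llbracket m,n\rrbracket\to\{0,1\}$, $h\{\omega\}:\mathbb Z\to\mathbb Z$ is defined by extending $\omega$ by $0$ on $x<m$ and $1$ on $x>n$, setting $h\{\omega\}(x)=x$ for $x<m$, and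 $h\{\omega\}(x)-h\{\omega\}(x-1)=1-2\omega(x)$; $h'\{\omega\}$ is defined the same way but extending $\omega$ by $1$ on all of $\mathbb Z\setminus\llbracket m,n\rrbracket$ (so $h'\{\omega\}(x)=-x$ for $x<m$). For functions, $f\le g$ means pointwise. *)

theory Defs
  imports "HOL-Probability.Probability" "HOL-Combinatorics.Permutations"
begin

text \<open>Bijections of [m,n] are represented as permutations of {m..n} (identity outside).
  Number of non-inversions: pairs m <= i < j <= n with w i < w j.\<close>

definition noninv :: "int \<Rightarrow> int \<Rightarrow> (int \<Rightarrow> int) \<Rightarrow> nat" where
  "noninv m n w = card {(i, j). m \<le> i \<and> i < j \<and> j \<le> n \<and> w i < w j}"

definition mallows_Z :: "real \<Rightarrow> int \<Rightarrow> int \<Rightarrow> real" where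
  "mallows_Z q m n = (\<Sum>w\<in>{w. w permutes {m..n}}. q ^ noninv m n w)"

definition mallows :: "real \<Rightarrow> int \<Rightarrow> int \<Rightarrow> (int \<Rightarrow> int) pmf" where
  "mallows q m n = embed_pmf (\<lambda>w. if w permutes {m..n} then q ^ noninv m n w / mallows_Z q m n else 0)"

text \<open>The points of the
  rate-1 Poisson process at site x are the partial sums of E(x,True,_); the points of the
  rate-q Poisson process at site x are the partial sums of E(x,False,_) divided by q
  (empty if q = 0). This is the standard construction of independent Poisson processes
  of intensities 1 and q on Z x [0,infinity).\<close>

definition clock_space :: "(int \<times> bool \<times> nat \<Rightarrow> real) measure" where
  "clock_space = PiM UNIV (\<lambda>_. density lborel (exponential_density 1))"

definition Pi1 :: "(int \<times> bool \<times> nat \<Rightarrow> real) \<Rightarrow> int \<Rightarrow> real set" where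
  "Pi1 E x = range (\<lambda>n. \<Sum>j\<le>n. E (x, True, j))"

definition Piq :: "real \<Rightarrow> (int \<times> bool \<times> nat \<Rightarrow> real) \<Rightarrow> int \<Rightarrow> real set" where
  "Piq q E x = (if q > 0 then range (\<lambda>n. (\<Sum>j\<le>n. E (x, False, j)) / q) else {})"

text \<open>An event (s,x,c): c = True is a point of Pi_1, c = False a point of Pi_q.\<close>

definition swap_step :: "real \<times> int \<times> bool \<Rightarrow> (int \<Rightarrow> int) \<Rightarrow> (int \<Rightarrow> int)" where
  "swap_step e \<eta> = (case e of (s, x, c) \<Rightarrow>
     if (c \<and> \<eta> x < \<eta> (x + 1)) \<or> (\<not> c \<and> \<eta> (x + 1) < \<eta> x)
     then \<eta>(x := \<eta> (x + 1), x + 1 := \<eta> x) else \<eta>)"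

definition event_times :: "real \<Rightarrow> (int \<times> bool \<times> nat \<Rightarrow> real) \<Rightarrow> int \<Rightarrow> int \<Rightarrow> real \<Rightarrow> real set" where
  "event_times q E a b t = {s. 0 < s \<and> s \<le> t \<and> (\<exists>x. a \<le> x \<and> x + 1 \<le> b \<and> (s \<in> Pi1 E x \<or> s \<in> Piq q E x))}"

text \<open>All events at a given time s (a.s. there is at most one), ordered by site then kind.\<close>

definition events_at :: "real \<Rightarrow> (int \<times> bool \<times> nat \<Rightarrow> real) \<Rightarrow> int \<Rightarrow> int \<Rightarrow> real \<Rightarrow> (real \<times> int \<times> bool) list" where
  "events_at q E a b s = concat (map (\<lambda>x.
      (if s \<in> Pi1 E x then [(s, x, True)] else []) @ (if s \<in> Piq q E x then [(s, x, False)] else []))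
      [a..b - 1])"

definition dyn :: "real \<Rightarrow> (int \<times> bool \<times> nat \<Rightarrow> real) \<Rightarrow> int \<Rightarrow> int \<Rightarrow> (int \<Rightarrow> int) \<Rightarrow> real \<Rightarrow> (int \<Rightarrow> int)" where
  "dyn q E a b \<eta> t = fold swap_step (concat (map (events_at q E a b) (sorted_list_of_set (event_times q E a b t)))) \<eta>"

definition hgt :: "int \<Rightarrow> int \<Rightarrow> (int \<Rightarrow> bool) \<Rightarrow> int \<Rightarrow> int" where
  "hgt m n \<omega> x = (if x < m then x else
     (m - 1) + (\<Sum>y\<in>{m..x}. 1 - 2 * (if y > n then 1 else if \<omega> y then 1 else 0)))"

definition hgt' :: "int \<Rightarrow> int \<Rightarrow> (int \<Rightarrow> bool) \<Rightarrow> int \<Rightarrow> int" where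
  "hgt' m n \<omega> x = (if x < m then - x else
     - (m - 1) + (\<Sum>y\<in>{m..x}. 1 - 2 * (if y > n then 1 else if \<omega> y then 1 else 0)))"

end

theory Submission
  imports Defs
begin


definition revp :: "int \<Rightarrow> int \<Rightarrow> int \<Rightarrow> int" where
  "revp m n x = (if m \<le> x \<and> x \<le> n then m + n - x else x)"

lemma revp_permutes: "revp m n permutes {m..n}"
proof -
  have inv: "\<And>x. revp m n (revp m n x) = x" by (auto simp: revp_def)
  have "\<And>x. x \<notin> {m..n} \<Longrightarrow> revp m n x = x" by (auto simp: revp_def)
  moreover have "\<And>y. \<exists>!x. revp m n x = y" by (metis inv)
  ultimately show ?thesis unfolding permutes_def by blast
qed

lemma noninv_revp: "noninv m n (revp m n) = 0"
proof -
  have "{(i, j). m \<le> i \<and> i < j \<and> j \<le> n \<and> revp m n i < revp m n j} = {}"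
    by (auto simp: revp_def)
  then show ?thesis unfolding noninv_def by (simp only: card.empty)
qed

lemma mallows_Z_ge1:
  assumes "0 \<le> q" shows "1 \<le> mallows_Z q m n"
proof -
  have fin: "finite {w. w permutes {m..n}}" by (rule finite_permutations) simp
  have "q ^ noninv m n (revp m n) \<le> mallows_Z q m n"
    unfolding mallows_Z_def
    by (rule member_le_sum) (use revp_permutes fin assms in auto)
  then show ?thesis by (simp add: noninv_revp)
qed

lemma set_pmf_mallows:
  assumes "0 \<le> q" and "w \<in> set_pmf (mallows q m n)" shows "w permutes {m..n}"
proof -
  let ?f = "\<lambda>w. if w permutes {m..n} then q ^ noninv m n w / mallows_Z q m n else 0"
  have Z: "1 \<le> mallows_Z q m n" using mallows_Z_ge1 assms(1) .
  have fin: "finite {w. w permutes {m..n}}" by (rule finite_permutations) simp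
  have nn: "\<And>x. 0 \<le> ?f x" using Z assms(1) by auto
  have "(\<integral>\<^sup>+x. ennreal (?f x) \<partial>count_space UNIV) = (\<Sum>x\<in>{w. w permutes {m..n}}. ennreal (?f x))"
    by (rule nn_integral_count_space') (use fin in auto)
  also have "\<dots> = ennreal (\<Sum>x\<in>{w. w permutes {m..n}}. ?f x)"
    by (rule sum_ennreal) (use nn in blast)
  also have "(\<Sum>x\<in>{w. w permutes {m..n}}. ?f x) = (\<Sum>x\<in>{w. w permutes {m..n}}. q ^ noninv m n x) / mallows_Z q m n"
    by (simp add: sum_divide_distrib)
  also have "\<dots> = 1" using Z by (simp add: mallows_Z_def)
  finally have prob: "(\<integral>\<^sup>+x. ennreal (?f x) \<partial>count_space UNIV) = 1" by simp
  have "set_pmf (mallows q m n) = {x. ?f x \<noteq> 0}"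
    unfolding mallows_def by (rule set_embed_pmf[OF nn prob])
  with assms(2) show ?thesis by (auto split: if_splits)
qed



lemma swap_step_perm:
  assumes "a \<le> x" "x + 1 \<le> b"
  shows "\<exists>\<pi>. \<pi> permutes {a..b} \<and> swap_step (s, x, c) \<eta> = \<eta> \<circ> \<pi>"
proof (cases "(c \<and> \<eta> x < \<eta> (x + 1)) \<or> (\<not> c \<and> \<eta> (x + 1) < \<eta> x)")
  case True
  have "Transposition.transpose x (x+1) permutes {a..b}"
    by (rule permutes_swap_id) (use assms in auto)
  moreover have "swap_step (s, x, c) \<eta> = \<eta> \<circ> Transposition.transpose x (x+1)"
    using True by (auto simp: swap_step_def fun_eq_iff Transposition.transpose_def)
  ultimately show ?thesis by blast
next
  case False
  then have "swap_step (s, x, c) \<eta> = \<eta> \<circ> id" by (auto simp: swap_step_def)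
  then show ?thesis using permutes_id by blast
qed

lemma fold_swap_perm:
  assumes "\<forall>e\<in>set L. a \<le> fst (snd e) \<and> fst (snd e) + 1 \<le> b"
  shows "\<exists>\<pi>. \<pi> permutes {a..b} \<and> fold swap_step L \<eta> = \<eta> \<circ> \<pi>"
  using assms
proof (induction L arbitrary: \<eta>)
  case Nil
  then show ?case using permutes_id by (metis comp_id fold_simps(1))
next
  case (Cons e L)
  obtain s x c where e: "e = (s, x, c)" by (cases e) auto
  obtain \<pi>1 where p1: "\<pi>1 permutes {a..b}" "swap_step e \<eta> = \<eta> \<circ> \<pi>1"
    using swap_step_perm[of a x b s c \<eta>] Cons.prems e by auto
  obtain \<pi>2 where p2: "\<pi>2 permutes {a..b}" "fold swap_step L (swap_step e \<eta>) = swap_step e \<eta> \<circ> \<pi>2"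
    using Cons.IH[of "swap_step e \<eta>"] Cons.prems unfolding comp_def by auto
  have "fold swap_step (e # L) \<eta> = \<eta> \<circ> (\<pi>1 \<circ> \<pi>2)" using p1 p2 by (simp add: comp_assoc)
  moreover have "\<pi>1 \<circ> \<pi>2 permutes {a..b}" using p1 p2 by (simp add: permutes_compose)
  ultimately show ?case by blast
qed

lemma events_at_sites:
  assumes "e \<in> set (concat (map (events_at q E a b) xs))"
  shows "a \<le> fst (snd e) \<and> fst (snd e) + 1 \<le> b"
  using assms by (auto simp: events_at_def split: if_splits)

lemma dyn_perm:
  "\<exists>\<pi>. \<pi> permutes {a..b} \<and> dyn q E a b \<eta> t = \<eta> \<circ> \<pi>"
  unfolding dyn_def by (rule fold_swap_perm) (use events_at_sites in blast)



definition FF :: "int \<Rightarrow> (int \<Rightarrow> bool) \<Rightarrow> int \<Rightarrow> int" where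
  "FF n \<omega> y = (if y > n then 1 else if \<omega> y then 1 else 0)"

definition GG :: "int \<Rightarrow> int \<Rightarrow> (int \<Rightarrow> bool) \<Rightarrow> int \<Rightarrow> int" where
  "GG m n \<omega> y = (if y < m then 0 else FF n \<omega> y)"

lemma hgt_sum: "hgt m n \<omega> x = x - 2 * (\<Sum>y\<in>{m..x}. FF n \<omega> y)"
proof (cases "x < m")
  case True then show ?thesis by (simp add: hgt_def)
next
  case False
  have "(\<Sum>y\<in>{m..x}. 1 - 2 * FF n \<omega> y) = (\<Sum>y\<in>{m..x}. 1) - 2 * (\<Sum>y\<in>{m..x}. FF n \<omega> y)"
    by (simp add: sum_subtractf sum_distrib_left)
  then show ?thesis using False by (simp add: hgt_def FF_def)
qed

lemma hgt'_eq: "hgt' m n \<omega> x = (if x < m then - x else hgt m n \<omega> x - 2 * (m - 1))"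
  by (simp add: hgt'_def hgt_def)

lemma hgt_rec: "hgt m n \<omega> x = hgt m n \<omega> (x - 1) + 1 - 2 * GG m n \<omega> x"
proof (cases "x < m")
  case True then show ?thesis by (simp add: hgt_def GG_def)
next
  case False
  then have "{m..x} = insert x {m..x-1}" by auto
  then have "(\<Sum>y\<in>{m..x}. FF n \<omega> y) = FF n \<omega> x + (\<Sum>y\<in>{m..x-1}. FF n \<omega> y)" by simp
  then show ?thesis using False by (simp add: hgt_sum GG_def)
qed

lemma hgt_cong:
  assumes "\<And>y. m \<le> y \<Longrightarrow> y \<le> n \<Longrightarrow> y \<le> x \<Longrightarrow> \<omega>1 y = \<omega>2 y"
  shows "hgt m n \<omega>1 x = hgt m n \<omega>2 x"
  unfolding hgt_sum using assms by (intro arg_cong2[where f="(-)"] refl arg_cong[where f="(*) 2"] sum.cong) (auto simp: FF_def)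

lemma hgt_mono:
  assumes "\<And>y. \<omega>2 y \<Longrightarrow> \<omega>1 y"
  shows "hgt m n \<omega>1 x \<le> hgt m n \<omega>2 x"
proof -
  have "(\<Sum>y\<in>{m..x}. FF n \<omega>2 y) \<le> (\<Sum>y\<in>{m..x}. FF n \<omega>1 y)"
    by (rule sum_mono) (use assms in \<open>auto simp: FF_def\<close>)
  then show ?thesis by (simp add: hgt_sum)
qed

lemma hgt_left: "x < m \<Longrightarrow> hgt m n \<omega> x = x" by (simp add: hgt_def)

lemma hgt_right: "n < x \<Longrightarrow> m \<le> x \<Longrightarrow> hgt m n \<omega> x = hgt m n \<omega> (x - 1) - 1"
  using hgt_rec[of m n \<omega> x] by (simp add: GG_def FF_def)

lemma hgt_lip: "hgt m n \<omega> x = hgt m n \<omega> (x - 1) + 1 \<or> hgt m n \<omega> x = hgt m n \<omega> (x - 1) - 1"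
  using hgt_rec[of m n \<omega> x] by (auto simp: GG_def FF_def)

definition opc :: "bool \<Rightarrow> int \<Rightarrow> int \<Rightarrow> int" where
  "opc c a b = (if c then min a b + 1 else max a b - 1)"

lemma hgt_swap:
  fixes \<eta> :: "int \<Rightarrow> int" and i :: int
  assumes "m \<le> x" "x + 1 \<le> n"
  defines "h \<equiv> hgt m n (\<lambda>y. \<eta> y \<le> i)"
  shows "hgt m n (\<lambda>y. swap_step (s, x, c) \<eta> y \<le> i) = h (x := opc c (h (x - 1)) (h (x + 1)))"
proof
  fix y
  let ?\<eta>' = "swap_step (s, x, c) \<eta>"
  let ?h' = "hgt m n (\<lambda>y. ?\<eta>' y \<le> i)"
  have same: "?\<eta>' z = \<eta> z" if "z \<noteq> x" "z \<noteq> x + 1" for z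
    using that by (auto simp: swap_step_def)
  have low: "?h' y = h y" if "y < x" for y
    unfolding h_def by (rule hgt_cong) (use that in \<open>simp add: same\<close>)
  have hx: "?h' x = h (x - 1) + 1 - 2 * GG m n (\<lambda>y. ?\<eta>' y \<le> i) x"
    using hgt_rec[of m n _ x] low[of "x - 1"] by simp
  have h1: "h (x + 1) = h (x - 1) + 2 - 2 * (GG m n (\<lambda>y. \<eta> y \<le> i) x + GG m n (\<lambda>y. \<eta> y \<le> i) (x + 1))"
    unfolding h_def using hgt_rec[of m n _ x] hgt_rec[of m n _ "x + 1"] by simp
  have h1': "?h' (x + 1) = ?h' (x - 1) + 2 - 2 * (GG m n (\<lambda>y. ?\<eta>' y \<le> i) x + GG m n (\<lambda>y. ?\<eta>' y \<le> i) (x + 1))"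
    using hgt_rec[of m n _ x] hgt_rec[of m n _ "x + 1"] by simp
  have gsum: "GG m n (\<lambda>y. ?\<eta>' y \<le> i) x + GG m n (\<lambda>y. ?\<eta>' y \<le> i) (x + 1)
      = GG m n (\<lambda>y. \<eta> y \<le> i) x + GG m n (\<lambda>y. \<eta> y \<le> i) (x + 1)"
    using assms(1,2) by (auto simp: GG_def FF_def swap_step_def)
  have hi: "?h' z = h z" if "x + 1 \<le> z" for z
    using that
  proof (induction z rule: int_ge_induct)
    case base
    then show ?case using h1 h1' gsum low[of "x - 1"] by simp
  next
    case (step z)
    have "GG m n (\<lambda>y. ?\<eta>' y \<le> i) (z + 1) = GG m n (\<lambda>y. \<eta> y \<le> i) (z + 1)"
      using step.hyps same[of "z + 1"] by (simp add: GG_def FF_def)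
    then show ?case using step.IH hgt_rec[of m n _ "z + 1"] unfolding h_def by simp
  qed
  have hxv: "?h' x = opc c (h (x - 1)) (h (x + 1))"
    unfolding hx h1 using assms(1,2) by (auto simp: opc_def GG_def FF_def swap_step_def)
  show "?h' y = (h (x := opc c (h (x - 1)) (h (x + 1)))) y"
    using low hi hxv by (cases "y < x"; cases "y = x") auto
qed



lemma opc_mono: "a \<le> a' \<Longrightarrow> b \<le> b' \<Longrightarrow> opc c a b \<le> opc c a' b'"
  by (auto simp: opc_def)

lemma hgt_not_min:
  assumes "x < a' \<or> b' \<le> x"
  shows "opc c (hgt a' b' \<omega> (x - 1)) (hgt a' b' \<omega> (x + 1)) \<le> hgt a' b' \<omega> x"
proof -
  have l1: "hgt a' b' \<omega> (x - 1) \<le> hgt a' b' \<omega> x + 1" using hgt_lip[of a' b' \<omega> x] by auto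
  have l2: "hgt a' b' \<omega> (x + 1) \<le> hgt a' b' \<omega> x + 1" using hgt_lip[of a' b' \<omega> "x + 1"] by auto
  have nm: "hgt a' b' \<omega> (x - 1) < hgt a' b' \<omega> x \<or> hgt a' b' \<omega> (x + 1) < hgt a' b' \<omega> x"
  proof (cases "x < a'")
    case True then show ?thesis by (simp add: hgt_left)
  next
    case False
    then have "b' < x + 1" "a' \<le> x + 1" using assms by auto
    then show ?thesis using hgt_right[of b' "x + 1" a' \<omega>] by simp
  qed
  show ?thesis using l1 l2 nm by (auto simp: opc_def)
qed

lemma fold_mono:
  fixes \<eta> \<theta> :: "int \<Rightarrow> int"
  assumes "\<forall>e\<in>set L. a \<le> fst (snd e) \<and> fst (snd e) + 1 \<le> b"
    and "\<forall>x. hgt a b (\<lambda>y. \<eta> y \<le> i) x \<le> hgt a' b' (\<lambda>y. \<theta> y \<le> j) x"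
  shows "\<forall>x. hgt a b (\<lambda>y. fold swap_step L \<eta> y \<le> i) x
     \<le> hgt a' b' (\<lambda>y. fold swap_step (filter (\<lambda>e. a' \<le> fst (snd e) \<and> fst (snd e) + 1 \<le> b') L) \<theta> y \<le> j) x"
  using assms
proof (induction L arbitrary: \<eta> \<theta>)
  case Nil
  then show ?case by simp
next
  case (Cons e L)
  obtain s x c where e: "e = (s, x, c)" by (cases e) auto
  have ab: "a \<le> x" "x + 1 \<le> b" using Cons.prems(1) e by auto
  let ?h = "hgt a b (\<lambda>y. \<eta> y \<le> i)"
  let ?g = "hgt a' b' (\<lambda>y. \<theta> y \<le> j)"
  have H: "hgt a b (\<lambda>y. swap_step e \<eta> y \<le> i) = ?h (x := opc c (?h (x - 1)) (?h (x + 1)))"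
    unfolding e by (rule hgt_swap) (use ab in auto)
  show ?case
  proof (cases "a' \<le> x \<and> x + 1 \<le> b'")
    case True
    have G: "hgt a' b' (\<lambda>y. swap_step e \<theta> y \<le> j) = ?g (x := opc c (?g (x - 1)) (?g (x + 1)))"
      unfolding e by (rule hgt_swap) (use True in auto)
    have "\<forall>y. hgt a b (\<lambda>y. swap_step e \<eta> y \<le> i) y \<le> hgt a' b' (\<lambda>y. swap_step e \<theta> y \<le> j) y"
      unfolding H G using Cons.prems(2) by (auto intro: opc_mono)
    from Cons.IH[OF _ this] Cons.prems(1) True e show ?thesis by simp
  next
    case False
    have nm: "opc c (?g (x - 1)) (?g (x + 1)) \<le> ?g x"
      by (rule hgt_not_min) (use False in auto)
    have "opc c (?h (x - 1)) (?h (x + 1)) \<le> opc c (?g (x - 1)) (?g (x + 1))"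
      using Cons.prems(2) by (auto intro: opc_mono)
    then have st: "\<forall>y. hgt a b (\<lambda>y. swap_step e \<eta> y \<le> i) y \<le> ?g y"
      unfolding H using Cons.prems(2) nm by auto
    have "filter (\<lambda>e. a' \<le> fst (snd e) \<and> fst (snd e) + 1 \<le> b') (e # L)
        = filter (\<lambda>e. a' \<le> fst (snd e) \<and> fst (snd e) + 1 \<le> b') L" using False e by simp
    with Cons.IH[OF _ st] Cons.prems(1) show ?thesis by simp
  qed
qed



lemma filter_upto:
  assumes "a \<le> a'" "c' \<le> c"
  shows "filter (\<lambda>x. a' \<le> x \<and> x \<le> c') [a..c] = [a'..c']"
proof (rule sorted_distinct_set_unique)
  show "sorted (filter (\<lambda>x. a' \<le> x \<and> x \<le> c') [a..c])" by (rule sorted_wrt_filter) simp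
  show "distinct (filter (\<lambda>x. a' \<le> x \<and> x \<le> c') [a..c])" by simp
  show "sorted [a'..c']" by simp
  show "distinct [a'..c']" by simp
  show "set (filter (\<lambda>x. a' \<le> x \<and> x \<le> c') [a..c]) = set [a'..c']" using assms by auto
qed

lemma sorted_list_subset:
  assumes "finite T" "T' \<subseteq> T"
  shows "sorted_list_of_set T' = filter (\<lambda>s. s \<in> T') (sorted_list_of_set T)"
proof (rule sorted_distinct_set_unique)
  show "sorted (filter (\<lambda>s. s \<in> T') (sorted_list_of_set T))" by (rule sorted_wrt_filter) simp
  show "distinct (filter (\<lambda>s. s \<in> T') (sorted_list_of_set T))" by simp
  show "sorted (sorted_list_of_set T')" by simp
  show "distinct (sorted_list_of_set T')" by simp
  have "finite T'" using assms finite_subset by blast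
  then show "set (sorted_list_of_set T') = set (filter (\<lambda>s. s \<in> T') (sorted_list_of_set T))"
    using assms by auto
qed

lemma concat_map_filter_nil:
  assumes "\<forall>x\<in>set xs. \<not> Q x \<longrightarrow> g x = []"
  shows "concat (map g (filter Q xs)) = concat (map g xs)"
  using assms by (induction xs) auto

lemma concat_map_if_nil:
  "concat (map (\<lambda>x. if Q x then f x else []) xs) = concat (map f (filter Q xs))"
  by (induction xs) auto

lemma events_at_filter:
  assumes "a \<le> a'" "b' \<le> b"
  shows "events_at q E a' b' s = filter (\<lambda>e. a' \<le> fst (snd e) \<and> fst (snd e) + 1 \<le> b') (events_at q E a b s)"
proof -
  let ?f = "\<lambda>x. (if s \<in> Pi1 E x then [(s, x, True)] else []) @ (if s \<in> Piq q E x then [(s, x, False)] else [])"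
  let ?P = "\<lambda>e::real \<times> int \<times> bool. a' \<le> fst (snd e) \<and> fst (snd e) + 1 \<le> b'"
  have "filter ?P (events_at q E a b s) = concat (map (\<lambda>x. filter ?P (?f x)) [a..b-1])"
    unfolding events_at_def by (simp add: filter_concat comp_def)
  also have "\<dots> = concat (map (\<lambda>x. if a' \<le> x \<and> x \<le> b' - 1 then ?f x else []) [a..b-1])"
    by (intro arg_cong[where f=concat] map_cong) auto
  also have "\<dots> = concat (map ?f (filter (\<lambda>x. a' \<le> x \<and> x \<le> b' - 1) [a..b-1]))"
    by (rule concat_map_if_nil)
  also have "filter (\<lambda>x. a' \<le> x \<and> x \<le> b' - 1) [a..b-1] = [a'..b'-1]"
    by (rule filter_upto) (use assms in auto)
  finally show ?thesis by (simp add: events_at_def)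
qed

lemma dyn_filter:
  assumes "a \<le> a'" "b' \<le> b" "finite (event_times q E a b t)"
  shows "dyn q E a' b' \<theta> t = fold swap_step
     (filter (\<lambda>e. a' \<le> fst (snd e) \<and> fst (snd e) + 1 \<le> b')
        (concat (map (events_at q E a b) (sorted_list_of_set (event_times q E a b t))))) \<theta>"
proof -
  let ?T = "event_times q E a b t" and ?T' = "event_times q E a' b' t"
  let ?P = "\<lambda>e::real \<times> int \<times> bool. a' \<le> fst (snd e) \<and> fst (snd e) + 1 \<le> b'"
  have sub: "?T' \<subseteq> ?T"
  proof
    fix s assume "s \<in> ?T'"
    then obtain x where "0 < s" "s \<le> t" "a' \<le> x" "x + 1 \<le> b'" "s \<in> Pi1 E x \<or> s \<in> Piq q E x"
      unfolding event_times_def by blast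
    then show "s \<in> ?T" unfolding event_times_def using assms(1,2)
      by (intro CollectI conjI exI[of _ x]) auto
  qed
  have "sorted_list_of_set ?T' = filter (\<lambda>s. s \<in> ?T') (sorted_list_of_set ?T)"
    by (rule sorted_list_subset[OF assms(3) sub])
  then have "concat (map (events_at q E a' b') (sorted_list_of_set ?T'))
      = concat (map (events_at q E a' b') (sorted_list_of_set ?T))"
    using concat_map_filter_nil[of "sorted_list_of_set ?T" "\<lambda>s. s \<in> ?T'" "events_at q E a' b'"]
    using assms(3)
    by (auto simp: event_times_def events_at_def concat_eq_Nil_conv)
  also have "\<dots> = concat (map (\<lambda>s. filter ?P (events_at q E a b s)) (sorted_list_of_set ?T))"
    by (intro arg_cong[where f=concat] map_cong refl) (rule events_at_filter[OF assms(1,2)])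
  also have "\<dots> = filter ?P (concat (map (events_at q E a b) (sorted_list_of_set ?T)))"
    by (simp add: filter_concat comp_def)
  finally show ?thesis by (simp add: dyn_def)
qed



lemma hgt_lip_le:
  assumes "y \<le> x"
  shows "hgt m n \<omega> x \<le> hgt m n \<omega> y + (x - y) \<and> hgt m n \<omega> y - (x - y) \<le> hgt m n \<omega> x"
  using assms
proof (induction x rule: int_ge_induct)
  case base then show ?case by simp
next
  case (step x)
  then show ?case using hgt_lip[of m n \<omega> "x + 1"] by auto
qed

lemma hgt_right_le:
  assumes "n \<le> y" "m \<le> y + 1" "y \<le> x"
  shows "hgt m n \<omega> x = hgt m n \<omega> y - (x - y)"
  using assms(3)
proof (induction x rule: int_ge_induct)
  case base then show ?case by simp
next
  case (step x)
  then show ?case using hgt_right[of n "x + 1" m \<omega>] assms by auto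
qed

lemma sum_perm_ind:
  assumes "p permutes S"
  shows "(\<Sum>y\<in>S. f (w (p y))) = (\<Sum>y\<in>S. (f (w y)::int))"
  using sum.permute[OF assms, of "\<lambda>y. f (w y)"] by (simp add: comp_def)

lemma sum_ind_interval:
  fixes a b l u :: int
  assumes "a \<le> l" "u \<le> b"
  shows "(\<Sum>y\<in>{a..b}. if l \<le> y \<and> y \<le> u then 1 else 0) = (\<Sum>y\<in>{l..u}. (1::int))"
proof -
  have "(\<Sum>y\<in>{a..b}. if l \<le> y \<and> y \<le> u then 1 else 0) = (\<Sum>y\<in>{l..u}. if l \<le> y \<and> y \<le> u then (1::int) else 0)"
    by (rule sum.mono_neutral_right) (use assms in auto)
  also have "\<dots> = (\<Sum>y\<in>{l..u}. (1::int))" by (rule sum.cong) auto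
  finally show ?thesis .
qed

lemma init_ineq:
  fixes X N k :: int and u \<pi> :: "int \<Rightarrow> int"
  assumes "1 \<le> N" "0 \<le> k" "k \<le> N" "N \<le> X"
    and u: "u permutes {-X+k..X}" and p: "\<pi> permutes {-X..k}"
  shows "hgt (-X) X (\<lambda>y. (u \<circ> \<pi>) y \<le> -1 + k - N) x \<le> hgt 1 N (\<lambda>y. id y \<le> k) x"
proof -
  let ?c = "-1 + k - N"
  let ?\<omega> = "\<lambda>y. (u \<circ> \<pi>) y \<le> ?c"
  let ?h = "hgt (-X) X ?\<omega>"
  let ?g = "hgt 1 N (\<lambda>y. id y \<le> k)"
  have uid: "u y = y" if "y < -X + k" for y
    using u that by (auto simp: permutes_def)
  have z2p: "u \<circ> \<pi> permutes {-X..X}"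
  proof -
    have "u permutes {-X..X}" by (rule permutes_subset[OF u]) (use assms in auto)
    moreover have "\<pi> permutes {-X..X}" by (rule permutes_subset[OF p]) (use assms in auto)
    ultimately show ?thesis by (rule permutes_compose[rotated])
  qed
  have S1: "(\<Sum>y\<in>{-X..k}. FF X ?\<omega> y) = (\<Sum>y\<in>{-X..k}. if u y \<le> ?c then 1 else 0)"
  proof -
    have "(\<Sum>y\<in>{-X..k}. FF X ?\<omega> y) = (\<Sum>y\<in>{-X..k}. if u (\<pi> y) \<le> ?c then 1 else 0)"
      by (rule sum.cong) (use assms in \<open>auto simp: FF_def\<close>)
    also have "\<dots> = (\<Sum>y\<in>{-X..k}. if u y \<le> ?c then 1 else 0)"
      by (rule sum_perm_ind[OF p, of "\<lambda>v. if v \<le> ?c then 1 else 0" u])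
    finally show ?thesis .
  qed
  have "(\<Sum>y\<in>{-X..-X+k-1}. (1::int)) = (\<Sum>y\<in>{-X..-X+k-1}. if u y \<le> ?c then 1 else 0)"
    by (rule sum.cong) (use assms uid in auto)
  also have "\<dots> \<le> (\<Sum>y\<in>{-X..k}. if u y \<le> ?c then 1 else 0)"
    by (rule sum_mono2) (use assms in auto)
  finally have "k \<le> (\<Sum>y\<in>{-X..k}. FF X ?\<omega> y)" using S1 assms by simp
  then have hk: "?h k \<le> -k" by (simp add: hgt_sum)
  have "(\<Sum>y\<in>{-X..X}. FF X ?\<omega> y) = (\<Sum>y\<in>{-X..X}. if (u \<circ> \<pi>) y \<le> ?c then 1 else 0)"
    by (rule sum.cong) (auto simp: FF_def)
  also have "\<dots> = (\<Sum>y\<in>{-X..X}. if y \<le> ?c then 1 else 0)"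
    using sum_perm_ind[OF z2p, of "\<lambda>v. if v \<le> ?c then 1 else 0" id] by simp
  also have "\<dots> = (\<Sum>y\<in>{-X..X}. if -X \<le> y \<and> y \<le> ?c then 1 else 0)"
    by (rule sum.cong) auto
  also have "\<dots> = (\<Sum>y\<in>{-X..?c}. (1::int))"
    by (rule sum_ind_interval) (use assms in auto)
  also have "\<dots> = X + k - N" using assms by simp
  finally have hX: "?h X \<le> 2 * N - 2 * k - X" by (simp add: hgt_sum)
  have g1: "?g x = - x" if "0 \<le> x" "x \<le> k" for x
    using that
  proof (induction x rule: int_ge_induct)
    case base then show ?case by (simp add: hgt_left)
  next
    case (step x) then show ?case using hgt_rec[of 1 N _ "x + 1"] by (simp add: GG_def FF_def)
  qed
  have g2: "?g x = x - 2 * k" if "k \<le> x" "x \<le> N" for x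
    using that
  proof (induction x rule: int_ge_induct)
    case base then show ?case using g1[of k] assms by simp
  next
    case (step x) then show ?case using hgt_rec[of 1 N _ "x + 1"] assms by (simp add: GG_def FF_def)
  qed
  have g3: "?g x = 2 * N - 2 * k - x" if "N \<le> x" for x
    using hgt_right_le[of N N 1 x "\<lambda>y. id y \<le> k"] g2[of N] that assms by simp
  show ?thesis
  proof (cases "x \<le> 0")
    case xle0: True
    show ?thesis
    proof (cases "x < -X")
      case True then show ?thesis using xle0 by (simp add: hgt_left)
    next
      case False
      have "?h x \<le> ?h (-X-1) + (x - (-X-1))" using hgt_lip_le[of "-X-1" x "-X" X ?\<omega>] False by simp
      moreover have "?h (-X-1) = -X-1" by (simp add: hgt_left)
      ultimately show ?thesis using xle0 by (simp add: hgt_left)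
    qed
  next
    case False
    show ?thesis
    proof (cases "x \<le> k")
      case True
      have "?h k \<le> ?h x + (k - x) \<and> ?h x - (k - x) \<le> ?h k" using hgt_lip_le[of x k] True by simp
      then show ?thesis using hk g1[of x] True False by simp
    next
      case xk: False
      show ?thesis
      proof (cases "x \<le> N")
        case True
        have "?h x \<le> ?h k + (x - k)" using hgt_lip_le[of k x] xk by simp
        then show ?thesis using hk g2[of x] True xk by simp
      next
        case xN: False
        show ?thesis
        proof (cases "x \<le> X")
          case True
          have "?h X \<le> ?h x + (X - x) \<and> ?h x - (X - x) \<le> ?h X" using hgt_lip_le[of x X] True by simp
          then show ?thesis using hX g3[of x] xN by simp
        next
          case False
          have "?h x = ?h X - (x - X)" by (rule hgt_right_le) (use False assms in auto)
          then show ?thesis using hX g3[of x] False assms by simp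
        qed
      qed
    qed
  qed
qed

lemma final_ineq:
  fixes X k :: int and z :: "int \<Rightarrow> int"
  assumes "0 \<le> k" "k \<le> X" and z: "z permutes {-X..X}"
  shows "hgt (-X) X (\<lambda>y. z y \<le> -X + k - 1) x \<le> hgt' (-X) X (\<lambda>y. z y \<le> k) x"
proof (cases "x < -X")
  case True then show ?thesis using assms by (simp add: hgt_left hgt'_eq)
next
  case False
  let ?D = "\<lambda>y. FF X (\<lambda>y. z y \<le> k) y - FF X (\<lambda>y. z y \<le> -X + k - 1) y"
  have D: "?D y = (if y \<le> X then (if -X + k \<le> z y \<and> z y \<le> k then 1 else 0) else 0)" for y
    using assms by (auto simp: FF_def)
  have "(\<Sum>y\<in>{-X..x}. ?D y) = (\<Sum>y\<in>{-X..min x X}. ?D y)"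
    by (rule sum.mono_neutral_right) (auto simp: FF_def)
  also have "\<dots> \<le> (\<Sum>y\<in>{-X..X}. ?D y)"
    by (rule sum_mono2) (use assms in \<open>auto simp: FF_def\<close>)
  also have "\<dots> = (\<Sum>y\<in>{-X..X}. if -X + k \<le> z y \<and> z y \<le> k then 1 else 0)"
    by (rule sum.cong) (use assms in \<open>auto simp: FF_def\<close>)
  also have "\<dots> = (\<Sum>y\<in>{-X..X}. if -X + k \<le> y \<and> y \<le> k then 1 else 0)"
    using sum_perm_ind[OF z, of "\<lambda>v. if -X + k \<le> v \<and> v \<le> k then 1 else 0" id] by simp
  also have "\<dots> = (\<Sum>y\<in>{-X+k..k}. (1::int))"
    by (rule sum_ind_interval) (use assms in auto)
  also have "\<dots> = X + 1" using assms by simp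
  finally have "(\<Sum>y\<in>{-X..x}. ?D y) \<le> X + 1" .
  then show ?thesis using False by (simp add: hgt'_eq hgt_sum sum_subtractf algebra_simps)
qed



definition good :: "(int \<times> bool \<times> nat \<Rightarrow> real) \<Rightarrow> bool" where
  "good E \<longleftrightarrow> (\<forall>i. 0 \<le> E i) \<and> (\<forall>x c n. \<exists>j\<ge>n. 1 \<le> E (x, c, j))"

lemma psum_big:
  fixes f :: "nat \<Rightarrow> real"
  assumes "\<forall>j. 0 \<le> f j" "\<forall>n. \<exists>j\<ge>n. 1 \<le> f j"
  shows "\<exists>n0. \<forall>n\<ge>n0. real M \<le> (\<Sum>j\<le>n. f j)"
proof (induction M)
  case 0 then show ?case using assms by (auto intro: sum_nonneg)
next
  case (Suc M)
  then obtain n0 where n0: "\<forall>n\<ge>n0. real M \<le> (\<Sum>j\<le>n. f j)" by blast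
  obtain j where j: "j \<ge> Suc n0" "1 \<le> f j" using assms(2) by blast
  have "real (Suc M) \<le> (\<Sum>j\<le>n. f j)" if "n \<ge> j" for n
  proof -
    have "(\<Sum>i\<le>j - 1. f i) + f j = (\<Sum>i\<in>insert j {..j - 1}. f i)"
      using j by (simp add: sum.insert)
    also have "\<dots> \<le> (\<Sum>i\<le>n. f i)"
      by (rule sum_mono2) (use that j assms in auto)
    finally have "(\<Sum>i\<le>j - 1. f i) + f j \<le> (\<Sum>i\<le>n. f i)" .
    moreover have "real M \<le> (\<Sum>i\<le>j - 1. f i)" using n0 j by auto
    ultimately show ?thesis using j by simp
  qed
  then show ?case by blast
qed

lemma psum_finite:
  fixes f :: "nat \<Rightarrow> real"
  assumes "\<forall>j. 0 \<le> f j" "\<forall>n. \<exists>j\<ge>n. 1 \<le> f j"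
  shows "finite {n. (\<Sum>j\<le>n. f j) \<le> T}"
proof -
  obtain n0 where n0: "\<forall>n\<ge>n0. real (nat (ceiling T) + 1) \<le> (\<Sum>j\<le>n. f j)"
    using psum_big[OF assms] by blast
  have "{n. (\<Sum>j\<le>n. f j) \<le> T} \<subseteq> {..<n0}"
  proof
    fix n assume "n \<in> {n. (\<Sum>j\<le>n. f j) \<le> T}"
    moreover have "T < real (nat (ceiling T) + 1)" by linarith
    ultimately show "n \<in> {..<n0}" using n0 by (force simp: not_less[symmetric])
  qed
  then show ?thesis using finite_subset by blast
qed

lemma good_finite:
  assumes "good E"
  shows "finite (event_times q E a b t)"
proof -
  have nn: "\<forall>j. 0 \<le> E (x, c, j)" and inf: "\<forall>n. \<exists>j\<ge>n. 1 \<le> E (x, c, j)" for x c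
    using assms by (auto simp: good_def)
  have f1: "finite (Pi1 E x \<inter> {..t})" for x
  proof -
    have "Pi1 E x \<inter> {..t} \<subseteq> (\<lambda>n. \<Sum>j\<le>n. E (x, True, j)) ` {n. (\<Sum>j\<le>n. E (x, True, j)) \<le> t}"
      by (auto simp: Pi1_def)
    then show ?thesis using psum_finite[OF nn inf] finite_subset by blast
  qed
  have f2: "finite (Piq q E x \<inter> {..t})" for x
  proof (cases "q > 0")
    case True
    have "Piq q E x \<inter> {..t} \<subseteq> (\<lambda>n. (\<Sum>j\<le>n. E (x, False, j)) / q) ` {n. (\<Sum>j\<le>n. E (x, False, j)) \<le> t * q}"
      using True by (auto simp: Piq_def pos_divide_le_eq)
    then show ?thesis using psum_finite[OF nn inf] finite_subset by blast
  qed (simp add: Piq_def)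
  have "event_times q E a b t \<subseteq> (\<Union>x\<in>{a..b}. (Pi1 E x \<inter> {..t}) \<union> (Piq q E x \<inter> {..t}))"
    unfolding event_times_def by force
  then show ?thesis using f1 f2 finite_subset by (metis (no_types, lifting) finite_UN_I finite_Un finite_atLeastAtMost_int)
qed



abbreviation M0 :: "real measure" where "M0 \<equiv> density lborel (exponential_density 1)"

lemma ps_M0: "prob_space M0" by (rule prob_space_exponential_density) simp

lemma ps_clock: "prob_space clock_space"
  unfolding clock_space_def by (rule prob_space_PiM) (rule ps_M0)

lemma AE_M0_nonneg: "AE x in M0. 0 \<le> x"
  by (subst AE_density) (auto simp: exponential_density_def)

lemma M0_lt1: "emeasure M0 {..<1} \<le> ennreal (1 - exp (-1))"
proof -
  interpret prob_space M0 by (rule ps_M0)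
  have D: "distributed M0 lborel (\<lambda>x. x) (exponential_density 1)"
    unfolding distributed_def by (auto simp: distr_id2)
  have "measure M0 {x \<in> space M0. x \<le> 1} = 1 - exp (- 1 * 1)"
    by (rule exponential_distributedD_le[OF D]) auto
  moreover have "emeasure M0 {..<1} \<le> emeasure M0 {x \<in> space M0. x \<le> 1}"
    by (rule emeasure_mono) auto
  ultimately show ?thesis by (simp add: emeasure_eq_measure)
qed

lemma AE_clock_comp: "AE E in clock_space. 0 \<le> E i"
  unfolding clock_space_def
  by (rule AE_PiM_component[where M="\<lambda>_. M0"]) (auto intro: ps_M0 AE_M0_nonneg)



lemma AE_clock_inf: "AE E in clock_space. \<exists>j\<ge>n. 1 \<le> E (x, c, j)"
proof -
  define r :: real where "r = 1 - exp (-1)"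
  have r: "0 \<le> r" "r < 1" unfolding r_def by auto
  define N where "N = {E \<in> space clock_space. \<forall>j\<ge>n. E (x, c, j) < 1}"
  have Nsets: "N \<in> sets clock_space"
    unfolding N_def clock_space_def by measurable
  have bound: "emeasure clock_space N \<le> ennreal (r ^ Suc m)" for m
  proof -
    define J where "J = (\<lambda>j. (x, c, j)) ` {n..n+m}"
    have cardJ: "card J = Suc m" unfolding J_def by (subst card_image) (auto simp: inj_on_def)
    have finJ: "finite J" unfolding J_def by simp
    have "N \<subseteq> prod_emb UNIV (\<lambda>_. M0) J (Pi\<^sub>E J (\<lambda>_. {..<1}))"
      unfolding N_def clock_space_def J_def by (auto simp: prod_emb_def space_PiM PiE_iff)
    then have "emeasure clock_space N \<le> emeasure clock_space (prod_emb UNIV (\<lambda>_. M0) J (Pi\<^sub>E J (\<lambda>_. {..<1})))"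
      by (intro emeasure_mono) (auto simp: clock_space_def intro!: sets_PiM_I_countable sets.sets_Collect_countable_All)
    also have "\<dots> = (\<Prod>i\<in>J. emeasure M0 {..<1})"
      unfolding clock_space_def by (rule emeasure_PiM_emb) (auto intro: ps_M0 finJ)
    also have "\<dots> = emeasure M0 {..<1} ^ Suc m" using cardJ by simp
    also have "\<dots> \<le> ennreal r ^ Suc m"
      by (rule power_mono) (use M0_lt1 in \<open>auto simp: r_def\<close>)
    also have "\<dots> = ennreal (r ^ Suc m)" by (rule ennreal_power[OF r(1)])
    finally show ?thesis .
  qed
  have lim: "(\<lambda>m. ennreal (r ^ Suc m)) \<longlonglongrightarrow> ennreal 0"
    by (rule tendsto_ennrealI) (rule LIMSEQ_Suc, rule LIMSEQ_realpow_zero; use r in auto)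
  have "emeasure clock_space N \<le> ennreal 0"
    by (rule LIMSEQ_le_const[OF lim]) (use bound in auto)
  then have "N \<in> null_sets clock_space" using Nsets by auto
  moreover have "{E \<in> space clock_space. \<not> (\<exists>j\<ge>n. 1 \<le> E (x, c, j))} \<subseteq> N"
    unfolding N_def by auto
  ultimately show ?thesis by (rule AE_I')
qed

lemma AE_good: "AE E in clock_space. good E"
proof -
  have "AE E in clock_space. \<forall>i. 0 \<le> E i"
    using AE_clock_comp by (simp add: AE_all_countable)
  moreover have "AE E in clock_space. \<forall>x c n. \<exists>j\<ge>n. 1 \<le> E (x, c, j)"
    using AE_clock_inf by (simp add: AE_all_countable)
  ultimately show ?thesis by eventually_elim (simp add: good_def)
qed



lemma core_agree:
  fixes p1 p2 r1 r2 i :: int and c :: bool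
  assumes "(p1 \<le> i) = (r1 \<le> i)" "(p2 \<le> i) = (r2 \<le> i)"
  defines "S1 \<equiv> (c \<and> p1 < p2) \<or> (\<not> c \<and> p2 < p1)" and "S2 \<equiv> (c \<and> r1 < r2) \<or> (\<not> c \<and> r2 < r1)"
  shows "((if S1 then p2 else p1) \<le> i) = ((if S2 then r2 else r1) \<le> i)"
    and "((if S1 then p1 else p2) \<le> i) = ((if S2 then r1 else r2) \<le> i)"
  using assms unfolding S1_def S2_def by (cases c; auto)+

lemma swap_step_at:
  "swap_step (s, x, c) \<eta> x = (if (c \<and> \<eta> x < \<eta> (x + 1)) \<or> (\<not> c \<and> \<eta> (x + 1) < \<eta> x) then \<eta> (x + 1) else \<eta> x)"
  "swap_step (s, x, c) \<eta> (x + 1) = (if (c \<and> \<eta> x < \<eta> (x + 1)) \<or> (\<not> c \<and> \<eta> (x + 1) < \<eta> x) then \<eta> x else \<eta> (x + 1))"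
  "y \<noteq> x \<Longrightarrow> y \<noteq> x + 1 \<Longrightarrow> swap_step (s, x, c) \<eta> y = \<eta> y"
  by (auto simp: swap_step_def)

lemma swap_agree:
  assumes "a \<le> x" "x + 1 \<le> b" "\<forall>y\<in>{a..b}. (\<eta>1 y \<le> i) = (\<eta>2 y \<le> (i::int))"
  shows "\<forall>y\<in>{a..b}. (swap_step (s, x, c) \<eta>1 y \<le> i) = (swap_step (s, x, c) \<eta>2 y \<le> i)"
proof
  fix y assume y: "y \<in> {a..b}"
  have bx: "(\<eta>1 x \<le> i) = (\<eta>2 x \<le> i)" and bx1: "(\<eta>1 (x+1) \<le> i) = (\<eta>2 (x+1) \<le> i)"
    using assms by auto
  show "(swap_step (s, x, c) \<eta>1 y \<le> i) = (swap_step (s, x, c) \<eta>2 y \<le> i)"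
  proof (cases "y = x")
    case True show ?thesis unfolding True swap_step_at by (rule core_agree(1)[OF bx bx1])
  next
    case False
    show ?thesis
    proof (cases "y = x + 1")
      case True show ?thesis unfolding True swap_step_at by (rule core_agree(2)[OF bx bx1])
    next
      case False
      with \<open>y \<noteq> x\<close> show ?thesis using assms(3) y by (simp add: swap_step_at(3))
    qed
  qed
qed

lemma fold_agree:
  assumes "\<forall>e\<in>set L. a \<le> fst (snd e) \<and> fst (snd e) + 1 \<le> b"
    and "\<forall>y\<in>{a..b}. (\<eta>1 y \<le> i) = (\<eta>2 y \<le> (i::int))"
  shows "\<forall>y\<in>{a..b}. (fold swap_step L \<eta>1 y \<le> i) = (fold swap_step L \<eta>2 y \<le> i)"
  using assms
proof (induction L arbitrary: \<eta>1 \<eta>2)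
  case Nil then show ?case by simp
next
  case (Cons e L)
  obtain s x c where e: "e = (s, x, c)" by (cases e) auto
  have "\<forall>y\<in>{a..b}. (swap_step e \<eta>1 y \<le> i) = (swap_step e \<eta>2 y \<le> i)"
    unfolding e by (rule swap_agree) (use Cons.prems e in auto)
  from Cons.IH[OF _ this] Cons.prems(1) show ?case by simp
qed

lemma dyn_agree:
  assumes "\<forall>y\<in>{a..b}. (\<eta>1 y \<le> i) = (\<eta>2 y \<le> (i::int))"
  shows "\<forall>y\<in>{a..b}. (dyn q E a b \<eta>1 t y \<le> i) = (dyn q E a b \<eta>2 t y \<le> i)"
  unfolding dyn_def by (rule fold_agree[OF _ assms]) (use events_at_sites in blast)

lemma AE_pmf_clock:
  assumes "\<forall>z\<in>set_pmf p. \<forall>E. good E \<longrightarrow> P (z, E)"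
  shows "AE \<omega> in measure_pmf p \<Otimes>\<^sub>M clock_space. P \<omega>"
proof -
  interpret cl: prob_space clock_space by (rule ps_clock)
  obtain N2 where N2: "{E \<in> space clock_space. \<not> good E} \<subseteq> N2" "emeasure clock_space N2 = 0" "N2 \<in> sets clock_space"
    using AE_good by (rule AE_E)
  have z: "emeasure (measure_pmf p) (UNIV - set_pmf p) = 0"
    using AE_iff_measurable[of "UNIV - set_pmf p" "measure_pmf p" "\<lambda>x. x \<in> set_pmf p"] AE_measure_pmf[of p]
    by auto
  let ?A = "(UNIV - set_pmf p) \<times> space clock_space"
  let ?B = "(UNIV :: 'a set) \<times> N2"
  have A: "?A \<in> null_sets (measure_pmf p \<Otimes>\<^sub>M clock_space)"
    using z by (auto simp: cl.emeasure_pair_measure_Times intro!: pair_measureI)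
  have B: "?B \<in> null_sets (measure_pmf p \<Otimes>\<^sub>M clock_space)"
    using N2 by (auto simp: cl.emeasure_pair_measure_Times intro!: pair_measureI)
  have nu: "?A \<union> ?B \<in> null_sets (measure_pmf p \<Otimes>\<^sub>M clock_space)" using A B by (rule null_sets.Un)
  have su: "{\<omega> \<in> space (measure_pmf p \<Otimes>\<^sub>M clock_space). \<not> P \<omega>} \<subseteq> ?A \<union> ?B"
    using assms N2(1) by (auto simp: space_pair_measure)
  show ?thesis by (rule AE_I'[OF nu su])
qed

lemma exists_from_limit:
  fixes f :: "'a \<Rightarrow> (int \<times> bool \<times> nat \<Rightarrow> real) \<Rightarrow> real \<Rightarrow> 'b"
  assumes lim: "((\<lambda>s. measure (measure_pmf p \<Otimes>\<^sub>M clock_space) {(u, E). f u E s = w}) \<longlongrightarrow> l) at_top"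
    and l: "0 < l"
  shows "\<exists>u\<in>set_pmf p. \<exists>E s. f u E s = w"
proof (rule ccontr)
  assume no: "\<not> ?thesis"
  interpret cl: prob_space clock_space by (rule ps_clock)
  have "eventually (\<lambda>s. 0 < measure (measure_pmf p \<Otimes>\<^sub>M clock_space) {(u, E). f u E s = w}) at_top"
    using order_tendstoD(1)[OF lim l] .
  then obtain s0 where s0: "\<forall>s\<ge>s0. 0 < measure (measure_pmf p \<Otimes>\<^sub>M clock_space) {(u, E). f u E s = w}"
    by (auto simp: eventually_at_top_linorder)
  define s where "s = s0"
  have s: "0 < measure (measure_pmf p \<Otimes>\<^sub>M clock_space) {(u, E). f u E s = w}"
    using s0 unfolding s_def by auto
  let ?S = "{(u, E). f u E s = w}"
  have z: "emeasure (measure_pmf p) (UNIV - set_pmf p) = 0"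
    using AE_iff_measurable[of "UNIV - set_pmf p" "measure_pmf p" "\<lambda>x. x \<in> set_pmf p"] AE_measure_pmf[of p]
    by auto
  show False
  proof (cases "?S \<in> sets (measure_pmf p \<Otimes>\<^sub>M clock_space)")
    case True
    then have sub: "?S \<subseteq> (UNIV - set_pmf p) \<times> space clock_space"
      using no sets.sets_into_space[OF True] by (auto simp: space_pair_measure)
    have "emeasure (measure_pmf p \<Otimes>\<^sub>M clock_space) ?S \<le> emeasure (measure_pmf p \<Otimes>\<^sub>M clock_space) ((UNIV - set_pmf p) \<times> space clock_space)"
      by (rule emeasure_mono[OF sub]) (auto intro!: pair_measureI)
    also have "\<dots> = 0" using z by (simp add: cl.emeasure_pair_measure_Times)
    finally have "measure (measure_pmf p \<Otimes>\<^sub>M clock_space) ?S = 0" by (simp add: measure_def)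
    then show False using s by simp
  next
    case False
    then show False using s by (simp add: measure_notin_sets)
  qed
qed



theorem lemma3p1:
  fixes N k :: int
  assumes "1 \<le> N" and "0 \<le> k" and "k \<le> N"
  shows "\<exists>X0. \<forall>X \<ge> X0. \<forall>(q::real) (C :: ((int \<Rightarrow> int) \<times> (int \<Rightarrow> int)) pmf).
    0 \<le> q \<longrightarrow> q < 1 \<longrightarrow>
    map_pmf fst C = mallows q (-X) k \<longrightarrow>
    (\<forall>w. ((\<lambda>s. measure (measure_pmf (mallows q (-X + k) X) \<Otimes>\<^sub>M clock_space)
              {(u, E). dyn q E (-X) k u s = w})
           \<longlongrightarrow> pmf (map_pmf snd C) w) at_top) \<longrightarrow>
    (\<forall>(z1, z2) \<in> set_pmf C. \<forall>x\<in>{-X..X}. (z1 x \<le> -X + k - 1) = (z2 x \<le> -X + k - 1)) \<longrightarrow>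
    (AE \<omega> in measure_pmf C \<Otimes>\<^sub>M clock_space.
      (case \<omega> of ((z1, z2), E) \<Rightarrow> \<forall>t\<ge>0.
        (\<forall>x. hgt (-X) X (\<lambda>y. dyn q E (-X) X z2 t y \<le> -1 + k - N) x
               \<le> hgt 1 N (\<lambda>y. dyn q E 1 N id t y \<le> k) x) \<and>
        (\<forall>x. hgt (-X) X (\<lambda>y. dyn q E (-X) X z2 t y \<le> -1 + k - N) x
               \<le> hgt (-X) X (\<lambda>y. dyn q E (-X) X z2 t y \<le> -X + k - 1) x) \<and>
        (\<forall>x. hgt (-X) X (\<lambda>y. dyn q E (-X) X z2 t y \<le> -X + k - 1) x
               = hgt (-X) X (\<lambda>y. dyn q E (-X) X z1 t y \<le> -X + k - 1) x) \<and>
        (\<forall>x. hgt (-X) X (\<lambda>y. dyn q E (-X) X z1 t y \<le> -X + k - 1) x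
               \<le> hgt' (-X) X (\<lambda>y. dyn q E (-X) X z1 t y \<le> k) x)))"
proof -
  have X0: "\<forall>X \<ge> N. \<forall>(q::real) (C :: ((int \<Rightarrow> int) \<times> (int \<Rightarrow> int)) pmf).
    0 \<le> q \<longrightarrow> q < 1 \<longrightarrow>
    map_pmf fst C = mallows q (-X) k \<longrightarrow>
    (\<forall>w. ((\<lambda>s. measure (measure_pmf (mallows q (-X + k) X) \<Otimes>\<^sub>M clock_space)
              {(u, E). dyn q E (-X) k u s = w})
           \<longlongrightarrow> pmf (map_pmf snd C) w) at_top) \<longrightarrow>
    (\<forall>(z1, z2) \<in> set_pmf C. \<forall>x\<in>{-X..X}. (z1 x \<le> -X + k - 1) = (z2 x \<le> -X + k - 1)) \<longrightarrow>
    (AE \<omega> in measure_pmf C \<Otimes>\<^sub>M clock_space.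
      (case \<omega> of ((z1, z2), E) \<Rightarrow> \<forall>t\<ge>0.
        (\<forall>x. hgt (-X) X (\<lambda>y. dyn q E (-X) X z2 t y \<le> -1 + k - N) x
               \<le> hgt 1 N (\<lambda>y. dyn q E 1 N id t y \<le> k) x) \<and>
        (\<forall>x. hgt (-X) X (\<lambda>y. dyn q E (-X) X z2 t y \<le> -1 + k - N) x
               \<le> hgt (-X) X (\<lambda>y. dyn q E (-X) X z2 t y \<le> -X + k - 1) x) \<and>
        (\<forall>x. hgt (-X) X (\<lambda>y. dyn q E (-X) X z2 t y \<le> -X + k - 1) x
               = hgt (-X) X (\<lambda>y. dyn q E (-X) X z1 t y \<le> -X + k - 1) x) \<and>
        (\<forall>x. hgt (-X) X (\<lambda>y. dyn q E (-X) X z1 t y \<le> -X + k - 1) x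
               \<le> hgt' (-X) X (\<lambda>y. dyn q E (-X) X z1 t y \<le> k) x)))"
  proof (intro allI impI)
    fix X :: int and q :: real and C :: "((int \<Rightarrow> int) \<times> (int \<Rightarrow> int)) pmf"
    assume XN: "N \<le> X" and q0: "0 \<le> q" and q1: "q < 1"
      and Hfst: "map_pmf fst C = mallows q (-X) k"
      and Hlim: "\<forall>w. ((\<lambda>s. measure (measure_pmf (mallows q (-X + k) X) \<Otimes>\<^sub>M clock_space)
              {(u, E). dyn q E (-X) k u s = w})
           \<longlongrightarrow> pmf (map_pmf snd C) w) at_top"
      and Hag: "\<forall>(z1, z2) \<in> set_pmf C. \<forall>x\<in>{-X..X}. (z1 x \<le> -X + k - 1) = (z2 x \<le> -X + k - 1)"
    show "AE \<omega> in measure_pmf C \<Otimes>\<^sub>M clock_space.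
      (case \<omega> of ((z1, z2), E) \<Rightarrow> \<forall>t\<ge>0.
        (\<forall>x. hgt (-X) X (\<lambda>y. dyn q E (-X) X z2 t y \<le> -1 + k - N) x
               \<le> hgt 1 N (\<lambda>y. dyn q E 1 N id t y \<le> k) x) \<and>
        (\<forall>x. hgt (-X) X (\<lambda>y. dyn q E (-X) X z2 t y \<le> -1 + k - N) x
               \<le> hgt (-X) X (\<lambda>y. dyn q E (-X) X z2 t y \<le> -X + k - 1) x) \<and>
        (\<forall>x. hgt (-X) X (\<lambda>y. dyn q E (-X) X z2 t y \<le> -X + k - 1) x
               = hgt (-X) X (\<lambda>y. dyn q E (-X) X z1 t y \<le> -X + k - 1) x) \<and>
        (\<forall>x. hgt (-X) X (\<lambda>y. dyn q E (-X) X z1 t y \<le> -X + k - 1) x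
               \<le> hgt' (-X) X (\<lambda>y. dyn q E (-X) X z1 t y \<le> k) x))"
    proof (rule AE_pmf_clock, intro ballI allI impI)
      fix z E assume zC: "z \<in> set_pmf C" and gE: "good E"
      obtain z1 z2 where zz: "z = (z1, z2)" by (cases z) auto
      have "z1 \<in> fst ` set_pmf C" using zC zz by force
      then have z1m: "z1 \<in> set_pmf (mallows q (-X) k)"
        using Hfst by (metis set_map_pmf)
      then have z1p: "z1 permutes {-X..k}" by (rule set_pmf_mallows[OF q0])
      have "z2 \<in> snd ` set_pmf C" using zC zz by force
      then have "z2 \<in> set_pmf (map_pmf snd C)" by (metis set_map_pmf)
      then have pos: "0 < pmf (map_pmf snd C) z2" by (rule pmf_positive)
      obtain u E' s where u: "u \<in> set_pmf (mallows q (-X + k) X)" and z2d: "dyn q E' (-X) k u s = z2"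
        using exists_from_limit[OF Hlim[rule_format, of z2] pos] by blast
      have up: "u permutes {-X + k..X}" by (rule set_pmf_mallows[OF q0 u])
      obtain \<pi> where pp: "\<pi> permutes {-X..k}" and z2e: "z2 = u \<circ> \<pi>"
        using dyn_perm[of "-X" k q E' u s] z2d by auto
      have ag: "\<forall>x\<in>{-X..X}. (z1 x \<le> -X + k - 1) = (z2 x \<le> -X + k - 1)"
        using Hag zC zz by auto
      have z1X: "z1 permutes {-X..X}" by (rule permutes_subset[OF z1p]) (use assms XN in auto)
      have main: "\<forall>t\<ge>0.
        (\<forall>x. hgt (-X) X (\<lambda>y. dyn q E (-X) X z2 t y \<le> -1 + k - N) x
               \<le> hgt 1 N (\<lambda>y. dyn q E 1 N id t y \<le> k) x) \<and>
        (\<forall>x. hgt (-X) X (\<lambda>y. dyn q E (-X) X z2 t y \<le> -1 + k - N) x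
               \<le> hgt (-X) X (\<lambda>y. dyn q E (-X) X z2 t y \<le> -X + k - 1) x) \<and>
        (\<forall>x. hgt (-X) X (\<lambda>y. dyn q E (-X) X z2 t y \<le> -X + k - 1) x
               = hgt (-X) X (\<lambda>y. dyn q E (-X) X z1 t y \<le> -X + k - 1) x) \<and>
        (\<forall>x. hgt (-X) X (\<lambda>y. dyn q E (-X) X z1 t y \<le> -X + k - 1) x
               \<le> hgt' (-X) X (\<lambda>y. dyn q E (-X) X z1 t y \<le> k) x)"
      proof (intro allI impI conjI)
        fix t :: real assume t0: "0 \<le> t"
        have fin: "finite (event_times q E (-X) X t)" by (rule good_finite[OF gE])
        define L where "L = concat (map (events_at q E (-X) X) (sorted_list_of_set (event_times q E (-X) X t)))"
        have dz2: "dyn q E (-X) X z2 t = fold swap_step L z2" by (simp add: dyn_def L_def)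
        have dxi: "dyn q E 1 N id t = fold swap_step (filter (\<lambda>e. 1 \<le> fst (snd e) \<and> fst (snd e) + 1 \<le> N) L) id"
          unfolding L_def by (rule dyn_filter) (use XN assms fin in auto)
        have Ls: "\<forall>e\<in>set L. -X \<le> fst (snd e) \<and> fst (snd e) + 1 \<le> X"
          unfolding L_def using events_at_sites by blast
        have init: "\<forall>x. hgt (-X) X (\<lambda>y. z2 y \<le> -1 + k - N) x \<le> hgt 1 N (\<lambda>y. id y \<le> k) x"
          using init_ineq[OF assms XN up pp] z2e by simp
        show "hgt (-X) X (\<lambda>y. dyn q E (-X) X z2 t y \<le> -1 + k - N) x
               \<le> hgt 1 N (\<lambda>y. dyn q E 1 N id t y \<le> k) x" for x
          using fold_mono[OF Ls init] unfolding dz2 dxi by blast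
        show "hgt (-X) X (\<lambda>y. dyn q E (-X) X z2 t y \<le> -1 + k - N) x
               \<le> hgt (-X) X (\<lambda>y. dyn q E (-X) X z2 t y \<le> -X + k - 1) x" for x
          by (rule hgt_mono) (use XN in auto)
        have ag2: "\<forall>y\<in>{-X..X}. (z2 y \<le> -X + k - 1) = (z1 y \<le> -X + k - 1)" using ag by auto
        have agt: "\<forall>y\<in>{-X..X}. (dyn q E (-X) X z2 t y \<le> -X + k - 1) = (dyn q E (-X) X z1 t y \<le> -X + k - 1)"
          by (rule dyn_agree[OF ag2])
        show "hgt (-X) X (\<lambda>y. dyn q E (-X) X z2 t y \<le> -X + k - 1) x
               = hgt (-X) X (\<lambda>y. dyn q E (-X) X z1 t y \<le> -X + k - 1) x" for x
          by (rule hgt_cong) (use agt in auto)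
        obtain \<pi>1 where p1: "\<pi>1 permutes {-X..X}" and d1: "dyn q E (-X) X z1 t = z1 \<circ> \<pi>1"
          using dyn_perm[of "-X" X q E z1 t] by auto
        have zp: "z1 \<circ> \<pi>1 permutes {-X..X}" by (rule permutes_compose[OF p1 z1X])
        show "hgt (-X) X (\<lambda>y. dyn q E (-X) X z1 t y \<le> -X + k - 1) x
               \<le> hgt' (-X) X (\<lambda>y. dyn q E (-X) X z1 t y \<le> k) x" for x
          unfolding d1 by (rule final_ineq[OF assms(2) _ zp]) (use assms XN in auto)
      qed
      show "case (z, E) of ((z1, z2), E) \<Rightarrow> \<forall>t\<ge>0.
        (\<forall>x. hgt (-X) X (\<lambda>y. dyn q E (-X) X z2 t y \<le> -1 + k - N) x
               \<le> hgt 1 N (\<lambda>y. dyn q E 1 N id t y \<le> k) x) \<and>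
        (\<forall>x. hgt (-X) X (\<lambda>y. dyn q E (-X) X z2 t y \<le> -1 + k - N) x
               \<le> hgt (-X) X (\<lambda>y. dyn q E (-X) X z2 t y \<le> -X + k - 1) x) \<and>
        (\<forall>x. hgt (-X) X (\<lambda>y. dyn q E (-X) X z2 t y \<le> -X + k - 1) x
               = hgt (-X) X (\<lambda>y. dyn q E (-X) X z1 t y \<le> -X + k - 1) x) \<and>
        (\<forall>x. hgt (-X) X (\<lambda>y. dyn q E (-X) X z1 t y \<le> -X + k - 1) x
               \<le> hgt' (-X) X (\<lambda>y. dyn q E (-X) X z1 t y \<le> k) x)"
        unfolding zz prod.case by (rule main)
    qed
  qed
  then show ?thesis by blast
qed

end
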